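(* Let $G$ be a finite group and $K$ an idempotent semifield. Let $V$ and $W$ be indecomposable representations of $G$ over $K$, and let $H_V$ and $H_W$ be subgroups of $G$ corresponding to $V$ and $W$ respectively (i.e. $H_V$ is the stabilizer in $G$ of some basis line of $V$, and $H_W$ the stabilizer of some basis line of $W$). Then the set of homomorphisms of representations $\phi:V\to W$ is in bijective correspondence with the set of all functions $H_V\backslash G/H_W\to K$, where $H_V\backslash G/H_W$ denotes the set of double cosets $H_V g H_W$, $g\in G$.
   Context: All semirings are commutative. A semifield is a semiring $K$ with $K\setminus\{0\}$ a multiplicative group; it is idempotent if $a+a=a$ for all $a$. A representation of $G$ over $K$ is a $K$-linear action of $G$ on a free module $K^n$ (equivalently a group homomorphism $G\to\mathrm{GL}_n(K)$). A homomorphism of representations $\phi:V\to W$ is a $K$-module homomorphism with $\phi(gv)=g\phi(v)$ for all $g\in G$, $v\in V$. A representation is indecomposable if it is not a direct sum of two nontrivial $G$-stable submodules. A basis line of a free $K$-module is a submodule spanned by one vector of a basis; the set of basis lines is independent of the basis and $G$ acts on it by $g\cdot\mathrm{span}(v)=\mathrm{span}(gv)$. *)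

theory Defs
  imports "HOL-Algebra.Group" "HOL-Library.FuncSet"
begin

text \<open>Idempotent semifield structure on a commutative semiring type 'k
  (0 \<noteq> 1 is already part of comm_semiring_1).\<close>
definition idempotent_semifield :: "'k::comm_semiring_1 itself \<Rightarrow> bool" where
  "idempotent_semifield _ \<longleftrightarrow>
     (\<forall>a::'k. a \<noteq> 0 \<longrightarrow> (\<exists>b. a * b = 1)) \<and> (\<forall>a::'k. a + a = a)"

definition vadd :: "('n \<Rightarrow> 'k::comm_semiring_1) \<Rightarrow> ('n \<Rightarrow> 'k) \<Rightarrow> ('n \<Rightarrow> 'k)" where
  "vadd u v = (\<lambda>i. u i + v i)"

definition vsmult :: "'k::comm_semiring_1 \<Rightarrow> ('n \<Rightarrow> 'k) \<Rightarrow> ('n \<Rightarrow> 'k)" where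
  "vsmult c v = (\<lambda>i. c * v i)"

definition vzero :: "'n \<Rightarrow> 'k::comm_semiring_1" where
  "vzero = (\<lambda>i. 0)"

definition klinear :: "(('n \<Rightarrow> 'k::comm_semiring_1) \<Rightarrow> ('m \<Rightarrow> 'k)) \<Rightarrow> bool" where
  "klinear f \<longleftrightarrow> (\<forall>u v. f (vadd u v) = vadd (f u) (f v)) \<and> (\<forall>c v. f (vsmult c v) = vsmult c (f v))"

definition representation ::
  "('g, 'b) monoid_scheme \<Rightarrow> ('g \<Rightarrow> ('n::finite \<Rightarrow> 'k::comm_semiring_1) \<Rightarrow> ('n \<Rightarrow> 'k)) \<Rightarrow> bool" where
  "representation G act \<longleftrightarrow>
     (\<forall>g\<in>carrier G. klinear (act g)) \<and>
     act \<one>\<^bsub>G\<^esub> = id \<and>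
     (\<forall>g\<in>carrier G. \<forall>h\<in>carrier G. act (g \<otimes>\<^bsub>G\<^esub> h) = act g \<circ> act h)"

definition submodule :: "('n \<Rightarrow> 'k::comm_semiring_1) set \<Rightarrow> bool" where
  "submodule S \<longleftrightarrow> vzero \<in> S \<and> (\<forall>u\<in>S. \<forall>v\<in>S. vadd u v \<in> S) \<and> (\<forall>c. \<forall>v\<in>S. vsmult c v \<in> S)"

definition G_stable ::
  "('g, 'b) monoid_scheme \<Rightarrow> ('g \<Rightarrow> ('n \<Rightarrow> 'k) \<Rightarrow> ('n \<Rightarrow> 'k)) \<Rightarrow> ('n \<Rightarrow> 'k) set \<Rightarrow> bool" where
  "G_stable G act S \<longleftrightarrow> (\<forall>g\<in>carrier G. act g ` S \<subseteq> S)"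

definition is_direct_sum :: "('n \<Rightarrow> 'k::comm_semiring_1) set \<Rightarrow> ('n \<Rightarrow> 'k) set \<Rightarrow> bool" where
  "is_direct_sum S T \<longleftrightarrow> (\<forall>v. \<exists>!p. fst p \<in> S \<and> snd p \<in> T \<and> v = vadd (fst p) (snd p))"

definition indecomposable_rep ::
  "('g, 'b) monoid_scheme \<Rightarrow> ('g \<Rightarrow> ('n::finite \<Rightarrow> 'k::comm_semiring_1) \<Rightarrow> ('n \<Rightarrow> 'k)) \<Rightarrow> bool" where
  "indecomposable_rep G act \<longleftrightarrow> representation G act \<and>
     \<not> (\<exists>S T. submodule S \<and> submodule T \<and> S \<noteq> {vzero} \<and> T \<noteq> {vzero} \<and>
              G_stable G act S \<and> G_stable G act T \<and> is_direct_sum S T)"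

text \<open>The basis line spanned by the i-th standard basis vector (the set of basis lines
  does not depend on the chosen basis).\<close>
definition basis_line :: "'n \<Rightarrow> ('n \<Rightarrow> 'k::comm_semiring_1) set" where
  "basis_line i = {vsmult c (\<lambda>j. if j = i then 1 else 0) | c. True}"

definition line_stabilizers ::
  "('g, 'b) monoid_scheme \<Rightarrow> ('g \<Rightarrow> ('n::finite \<Rightarrow> 'k::comm_semiring_1) \<Rightarrow> ('n \<Rightarrow> 'k)) \<Rightarrow> 'g set set" where
  "line_stabilizers G act =
     {{g \<in> carrier G. act g ` basis_line i = basis_line i} | i. True}"

definition rep_homs ::
  "('g, 'b) monoid_scheme \<Rightarrow> ('g \<Rightarrow> ('n \<Rightarrow> 'k::comm_semiring_1) \<Rightarrow> ('n \<Rightarrow> 'k))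
     \<Rightarrow> ('g \<Rightarrow> ('m \<Rightarrow> 'k) \<Rightarrow> ('m \<Rightarrow> 'k)) \<Rightarrow> (('n \<Rightarrow> 'k) \<Rightarrow> ('m \<Rightarrow> 'k)) set" where
  "rep_homs G actV actW =
     {\<phi>. klinear \<phi> \<and> (\<forall>g\<in>carrier G. \<forall>v. \<phi> (actV g v) = actW g (\<phi> v))}"

definition double_coset :: "('g, 'b) monoid_scheme \<Rightarrow> 'g set \<Rightarrow> 'g \<Rightarrow> 'g set \<Rightarrow> 'g set" where
  "double_coset G H g K = {h \<otimes>\<^bsub>G\<^esub> g \<otimes>\<^bsub>G\<^esub> k | h k. h \<in> H \<and> k \<in> K}"

definition double_cosets :: "('g, 'b) monoid_scheme \<Rightarrow> 'g set \<Rightarrow> 'g set \<Rightarrow> 'g set set" where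
  "double_cosets G H K = (\<lambda>g. double_coset G H g K) ` carrier G"

end

theory Submission
  imports Defs
begin


lemma finite_pow_repeat:
  assumes "finite (carrier G)" "x \<in> carrier G" "monoid G"
  shows "\<exists>i j. i < j \<and> x [^]\<^bsub>G\<^esub> (i::nat) = x [^]\<^bsub>G\<^esub> j"
proof (rule ccontr)
  assume "\<not> ?thesis"
  then have "inj_on (\<lambda>i::nat. x [^]\<^bsub>G\<^esub> i) {0..card (carrier G)}"
    unfolding inj_on_def by (metis linorder_neqE_nat)
  moreover have "(\<lambda>i::nat. x [^]\<^bsub>G\<^esub> i) ` {0..card (carrier G)} \<subseteq> carrier G"
    using assms by (auto intro: monoid.nat_pow_closed)
  ultimately have "card {0..card (carrier G)} \<le> card (carrier G)"
    using card_inj_on_le assms(1) by blast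
  then show False by simp
qed

section \<open>Semifield facts\<close>

context
  fixes T :: "'k::comm_semiring_1 itself"
  assumes sf: "idempotent_semifield TYPE('k)"
begin

lemma sf_inv: "(a::'k) \<noteq> 0 \<Longrightarrow> \<exists>b. a * b = 1"
  using sf unfolding idempotent_semifield_def by blast

lemma sf_idem: "(a::'k) + a = a"
  using sf unfolding idempotent_semifield_def by blast

lemma sf_zsf: assumes "(a::'k) + b = 0" shows "a = 0"
proof -
  have "a = a + (a + b)" using assms by simp
  also have "\<dots> = (a + a) + b" by (simp add: add.assoc)
  also have "\<dots> = 0" using assms sf_idem by simp
  finally show ?thesis .
qed

lemma sf_nzd: assumes "(a::'k) * b = 0" shows "a = 0 \<or> b = 0"
proof (cases "a = 0")
  case False
  then obtain a' where "a * a' = 1" using sf_inv by blast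
  then have "b = a' * (a * b)" by (metis mult.assoc mult.commute mult_1)
  then show ?thesis using assms by simp
qed simp

lemma sf_mult_nz: "(a::'k) \<noteq> 0 \<Longrightarrow> b \<noteq> 0 \<Longrightarrow> a * b \<noteq> 0"
  using sf_nzd by blast

lemma sf_sum0: assumes "finite A" "sum f A = (0::'k)" "x \<in> A" shows "f x = 0"
  using assms
proof (induction A rule: finite_induct)
  case (insert y A)
  then have "f y + sum f A = 0" by simp
  then have "f y = 0" "sum f A = 0" using sf_zsf add.commute by metis+
  then show ?case using insert by auto
qed simp

lemma sf_cancel: assumes "(c::'k) \<noteq> 0" "a * c = b * c" shows "a = b"
proof -
  obtain c' where c': "c * c' = 1" using sf_inv assms(1) by blast
  have "a = a * c * c'" using c' by (simp add: mult.assoc)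
  also have "\<dots> = b * c * c'" using assms by simp
  also have "\<dots> = b" using c' by (simp add: mult.assoc)
  finally show ?thesis .
qed

lemma sf_torsion: assumes "(a::'k) ^ N = 1" "N > 0" shows "a = 1"
proof -
  obtain n where N: "N = Suc n" using assms(2) gr0_implies_Suc by blast
  define s where "s = (\<Sum>k<N. a ^ k)"
  have s1: "s = 1 + (\<Sum>k<n. a ^ Suc k)" unfolding s_def N sum.lessThan_Suc_shift
    by simp
  have "s * a = (\<Sum>k<N. a ^ Suc k)" unfolding s_def sum_distrib_right
    by (simp add: mult.commute)
  also have "\<dots> = (\<Sum>k<n. a ^ Suc k) + a ^ N" unfolding N by simp
  also have "\<dots> = s" using assms(1) s1 by (simp add: add.commute)
  finally have "s * a = s * 1" by simp
  moreover have "s \<noteq> 0" using s1 sf_zsf by force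
  ultimately show ?thesis using sf_cancel by (metis mult.commute)
qed

end

lemma idem_sum_cases:
  fixes f :: "'x \<Rightarrow> 'a::comm_monoid_add"
  assumes "finite A" "\<forall>x\<in>A. f x = 0 \<or> f x = a" "a + a = a"
  shows "sum f A = 0 \<or> sum f A = a"
  using assms
proof (induction A rule: finite_induct)
  case (insert y A)
  then have "sum f A = 0 \<or> sum f A = a" "f y = 0 \<or> f y = a" by auto
  then show ?case using insert assms(3) by auto
qed simp

lemma idem_sum:
  fixes f :: "'x \<Rightarrow> 'a::comm_monoid_add"
  assumes "finite A" "\<forall>x\<in>A. f x = 0 \<or> f x = a" "a + a = a" "x0 \<in> A" "f x0 = a"
  shows "sum f A = a"
proof -
  have "sum f A = f x0 + sum f (A - {x0})" using assms sum.remove by metis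
  moreover have "sum f (A - {x0}) = 0 \<or> sum f (A - {x0}) = a"
    using idem_sum_cases[of "A - {x0}" f a] assms by auto
  ultimately show ?thesis using assms by auto
qed

section \<open>Vectors\<close>

definition vsum :: "('x \<Rightarrow> 'n \<Rightarrow> 'k::comm_semiring_1) \<Rightarrow> 'x set \<Rightarrow> 'n \<Rightarrow> 'k" where
  "vsum f A = (\<lambda>j. \<Sum>x\<in>A. f x j)"

definition uv :: "'n \<Rightarrow> 'n \<Rightarrow> 'k::comm_semiring_1" where
  "uv i = (\<lambda>j. if j = i then 1 else 0)"

lemma klinear_add: "klinear f \<Longrightarrow> f (vadd u v) = vadd (f u) (f v)"
  unfolding klinear_def by blast

lemma klinear_smult: "klinear f \<Longrightarrow> f (vsmult c v) = vsmult c (f v)"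
  unfolding klinear_def by blast

lemma klinear_zero: assumes "klinear f" shows "f vzero = vzero"
proof -
  have "vzero = vsmult 0 (vzero :: 'a \<Rightarrow> 'b::comm_semiring_1)" by (simp add: vzero_def vsmult_def)
  then have "f vzero = vsmult 0 (f vzero)" using klinear_smult[OF assms] by metis
  then show ?thesis by (simp add: vzero_def vsmult_def)
qed

lemma klinear_vsum: assumes "klinear f" "finite A" shows "f (vsum g A) = vsum (\<lambda>x. f (g x)) A"
  using assms(2)
proof (induction A rule: finite_induct)
  case empty
  have "vsum g {} = vzero" "vsum (\<lambda>x. f (g x)) {} = vzero" by (auto simp: vsum_def vzero_def)
  then show ?case using klinear_zero[OF assms(1)] by simp
next
  case (insert x A)
  have "vsum g (insert x A) = vadd (g x) (vsum g A)"
    "vsum (\<lambda>x. f (g x)) (insert x A) = vadd (f (g x)) (vsum (\<lambda>x. f (g x)) A)"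
    using insert by (auto simp: vsum_def vadd_def)
  then show ?case using insert klinear_add[OF assms(1)] by simp
qed

lemma vec_decomp: "(v :: 'n::finite \<Rightarrow> 'k::comm_semiring_1) = vsum (\<lambda>i. vsmult (v i) (uv i)) UNIV"
proof (rule ext)
  fix x
  have "(\<Sum>i\<in>UNIV. v i * (if x = i then 1 else 0)) = (\<Sum>i\<in>UNIV. if i = x then v i else 0)"
    by (rule sum.cong) auto
  then show "v x = vsum (\<lambda>i. vsmult (v i) (uv i)) UNIV x"
    by (simp add: vsum_def vsmult_def uv_def)
qed

lemma klinear_apply:
  assumes "klinear f"
  shows "f (v :: 'n::finite \<Rightarrow> 'k::comm_semiring_1) j = (\<Sum>i\<in>UNIV. v i * f (uv i) j)"
proof -
  have "f v = f (vsum (\<lambda>i. vsmult (v i) (uv i)) UNIV)" using vec_decomp by metis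
  also have "\<dots> = vsum (\<lambda>i. vsmult (v i) (f (uv i))) UNIV"
    using klinear_vsum[OF assms, of UNIV "\<lambda>i. vsmult (v i) (uv i)"] klinear_smult[OF assms] by simp
  finally show ?thesis by (simp add: vsum_def vsmult_def)
qed



locale mrep =
  fixes G :: "('g, 'b) monoid_scheme"
    and act :: "'g \<Rightarrow> ('n::finite \<Rightarrow> 'k::comm_semiring_1) \<Rightarrow> ('n \<Rightarrow> 'k)"
    and i0 :: 'n and H :: "'g set"
  assumes grp: "group G" and fin: "finite (carrier G)"
    and sf: "idempotent_semifield TYPE('k)"
    and ind: "indecomposable_rep G act"
    and H_def: "H = {g \<in> carrier G. act g ` basis_line i0 = basis_line i0}"
begin

lemma rep: "representation G act" using ind unfolding indecomposable_rep_def by simp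

lemma lin: "g \<in> carrier G \<Longrightarrow> klinear (act g)"
  using rep unfolding representation_def by simp

lemma act_one: "act \<one>\<^bsub>G\<^esub> = id"
  using rep unfolding representation_def by simp

lemma act_mult: "g \<in> carrier G \<Longrightarrow> h \<in> carrier G \<Longrightarrow> act (g \<otimes>\<^bsub>G\<^esub> h) v = act g (act h v)"
  using rep unfolding representation_def by simp

lemma inv_G: "g \<in> carrier G \<Longrightarrow> inv\<^bsub>G\<^esub> g \<in> carrier G"
  using grp by (simp add: group.inv_closed)

lemma act_inv1: "g \<in> carrier G \<Longrightarrow> act (inv\<^bsub>G\<^esub> g) (act g v) = v"
  using grp act_mult[of "inv\<^bsub>G\<^esub> g" g v] act_one by (simp add: group.l_inv group.inv_closed)

lemma act_inv2: "g \<in> carrier G \<Longrightarrow> act g (act (inv\<^bsub>G\<^esub> g) v) = v"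
  using grp act_mult[of g "inv\<^bsub>G\<^esub> g" v] act_one by (simp add: group.r_inv group.inv_closed)

lemma act_smult: "g \<in> carrier G \<Longrightarrow> act g (vsmult c v) = vsmult c (act g v)"
  by (rule klinear_smult[OF lin])

lemma act_apply: "g \<in> carrier G \<Longrightarrow> act g v j = (\<Sum>i\<in>UNIV. v i * act g (uv i) j)"
  by (rule klinear_apply[OF lin])

lemma uv_nz: "uv i \<noteq> (vzero :: 'n \<Rightarrow> 'k)"
proof
  assume "uv i = (vzero :: 'n \<Rightarrow> 'k)"
  then have "uv i i = (vzero :: 'n \<Rightarrow> 'k) i" by simp
  then show False by (simp add: uv_def vzero_def)
qed

lemma mono:
  assumes g: "g \<in> carrier G"
  shows "\<exists>j c. c \<noteq> 0 \<and> act g (uv k) = vsmult c (uv j)"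
proof -
  define a where "a = act g (uv k)"
  define B where "B = act (inv\<^bsub>G\<^esub> g)"
  have Bl: "klinear B" unfolding B_def by (rule lin[OF inv_G[OF g]])
  have Ba: "B a = uv k" unfolding a_def B_def by (rule act_inv1[OF g])
  have comp: "uv k l = (\<Sum>j\<in>UNIV. a j * B (uv j) l)" for l
    unfolding Ba[symmetric] by (rule klinear_apply[OF Bl])
  have "(\<Sum>j\<in>UNIV. a j * B (uv j) k) \<noteq> 0" using comp[of k] by (simp add: uv_def)
  then obtain j where j: "a j * B (uv j) k \<noteq> 0"
    using sum.neutral[of UNIV "\<lambda>j. a j * B (uv j) k"] by blast
  then have aj: "a j \<noteq> 0" by auto
  have Bl0: "B (uv j) l = 0" if "l \<noteq> k" for l
  proof -
    have "(\<Sum>j\<in>UNIV. a j * B (uv j) l) = 0" using comp[of l] that by (simp add: uv_def)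
    then have "a j * B (uv j) l = 0" using sf_sum0[OF sf, of UNIV "\<lambda>j. a j * B (uv j) l" j] by simp
    then show ?thesis using aj sf_nzd[OF sf, of "a j" "B (uv j) l"] by simp
  qed
  define \<beta> where "\<beta> = B (uv j) k"
  have Bj: "B (uv j) = vsmult \<beta> (uv k)"
  proof (rule ext)
    fix l show "B (uv j) l = vsmult \<beta> (uv k) l"
      by (cases "l = k") (simp_all add: vsmult_def uv_def[of k] \<beta>_def Bl0)
  qed
  have "uv j = act g (B (uv j))" unfolding B_def by (rule act_inv2[OF g, symmetric])
  also have "\<dots> = vsmult \<beta> a" unfolding Bj a_def by (rule act_smult[OF g])
  finally have ej: "uv j = vsmult \<beta> a" .
  then have "uv j j = vsmult \<beta> a j" by simp
  then have "1 = \<beta> * a j" by (simp add: uv_def vsmult_def)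
  then have "\<beta> \<noteq> 0" by auto
  then obtain \<beta>' where b': "\<beta> * \<beta>' = 1" using sf_inv[OF sf] by blast
  have "a = vsmult \<beta>' (uv j)"
  proof (rule ext)
    fix i
    have "a i = \<beta>' * (\<beta> * a i)" using b' by (metis mult.assoc mult.commute mult_1)
    moreover have "uv j i = \<beta> * a i" using ej by (simp add: vsmult_def)
    ultimately show "a i = vsmult \<beta>' (uv j) i" by (simp add: vsmult_def)
  qed
  moreover have "\<beta>' \<noteq> 0" using b' by auto
  ultimately show ?thesis unfolding a_def by blast
qed

lemma minj:
  assumes g: "g \<in> carrier G" and c: "c \<noteq> 0" "c' \<noteq> 0"
    and e1: "act g (uv k) = vsmult c (uv j)" and e2: "act g (uv k') = vsmult c' (uv j)"
  shows "k = k'"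
proof (rule ccontr)
  assume kk: "k \<noteq> k'"
  define b where "b = act (inv\<^bsub>G\<^esub> g) (uv j)"
  have "uv k = vsmult c b" unfolding b_def using act_inv1[OF g, of "uv k"] e1 act_smult inv_G g by metis
  then have "uv k k = vsmult c b k" by simp
  then have 1: "1 = c * b k" by (simp add: uv_def vsmult_def)
  have "uv k' = vsmult c' b" unfolding b_def using act_inv1[OF g, of "uv k'"] e2 act_smult inv_G g by metis
  then have "uv k' k = vsmult c' b k" by simp
  then have "0 = c' * b k" using kk by (simp add: uv_def vsmult_def)
  then have "b k = 0" using c sf_nzd[OF sf, of c' "b k"] by simp
  then show False using 1 by simp
qed

lemma compo:
  assumes g: "g \<in> carrier G" and c: "c \<noteq> 0" and e: "act g (uv k) = vsmult c (uv j)"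
  shows "act g u j = c * u k"
proof -
  have "act g u j = (\<Sum>i\<in>UNIV. u i * act g (uv i) j)" by (rule act_apply[OF g])
  also have "\<dots> = (\<Sum>i\<in>UNIV. if i = k then c * u k else 0)"
  proof (rule sum.cong)
    fix i
    show "u i * act g (uv i) j = (if i = k then c * u k else 0)"
    proof (cases "i = k")
      case True then show ?thesis using e by (simp add: vsmult_def uv_def mult.commute)
    next
      case False
      obtain j' c' where j': "c' \<noteq> 0" "act g (uv i) = vsmult c' (uv j')" using mono[OF g] by blast
      have "j' \<noteq> j"
      proof
        assume "j' = j"
        then show False using minj[OF g c j'(1) e] j'(2) False by simp
      qed
      then show ?thesis using False j' by (simp add: vsmult_def uv_def)
    qed
  qed simp
  finally show ?thesis by simp
qed

lemma act_uv_inv: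
  assumes g: "g \<in> carrier G" and c: "c \<noteq> 0" and e: "act g (uv k) = vsmult c (uv j)"
  shows "\<exists>c'. c' \<noteq> 0 \<and> c * c' = 1 \<and> act (inv\<^bsub>G\<^esub> g) (uv j) = vsmult c' (uv k)"
proof -
  obtain c' where c': "c * c' = 1" using sf_inv[OF sf c] by blast
  have "uv k = act (inv\<^bsub>G\<^esub> g) (vsmult c (uv j))"
    using act_inv1[OF g, of "uv k"] e by simp
  also have "\<dots> = vsmult c (act (inv\<^bsub>G\<^esub> g) (uv j))" by (rule act_smult[OF inv_G[OF g]])
  finally have "uv k = vsmult c (act (inv\<^bsub>G\<^esub> g) (uv j))" .
  then have "vsmult c' (uv k) = act (inv\<^bsub>G\<^esub> g) (uv j)"
    using c' by (auto simp: vsmult_def mult.assoc[symmetric] mult.commute[of c'])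
  moreover have "c' \<noteq> 0" using c' by auto
  ultimately show ?thesis using c' by (intro exI[of _ c']) simp
qed

end



lemma vsmult_vsmult: "vsmult a (vsmult b v) = vsmult (a * b) v"
  by (simp add: vsmult_def mult.assoc)

lemma vsmult_one: "vsmult 1 v = v"
  by (simp add: vsmult_def)

lemma sf_pow_nz: "idempotent_semifield TYPE('k::comm_semiring_1) \<Longrightarrow> (c::'k) \<noteq> 0 \<Longrightarrow> c ^ n \<noteq> 0"
proof (induction n)
  case (Suc n)
  then show ?case using sf_mult_nz[OF Suc(2) Suc(3), of "c ^ n"] by simp
qed simp

context mrep
begin

lemma one_G: "\<one>\<^bsub>G\<^esub> \<in> carrier G"
  using grp by (simp add: group.is_monoid monoid.one_closed)

lemma mult_G: "g \<in> carrier G \<Longrightarrow> h \<in> carrier G \<Longrightarrow> g \<otimes>\<^bsub>G\<^esub> h \<in> carrier G"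
  using grp by (simp add: group.is_monoid monoid.m_closed)

lemma trans_ex: "\<exists>g\<in>carrier G. \<exists>c. c \<noteq> 0 \<and> act g (uv i0) = vsmult c (uv i)"
proof (rule ccontr)
  define Orb where "Orb = {i. \<exists>g\<in>carrier G. \<exists>c. c \<noteq> 0 \<and> act g (uv i0) = vsmult c (uv i)}"
  assume "\<not> ?thesis"
  then have iO: "i \<notin> Orb" unfolding Orb_def by blast
  have i0O: "i0 \<in> Orb" unfolding Orb_def
    using one_G act_one vsmult_one[of "uv i0"] by (intro CollectI bexI[of _ "\<one>\<^bsub>G\<^esub>"] exI[of _ 1]) (auto simp: vsmult_one)
  have closeO: "j \<in> Orb" if k: "k \<in> Orb" and g: "g \<in> carrier G" and c: "c \<noteq> 0"
    and e: "act g (uv k) = vsmult c (uv j)" for k g c j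
  proof -
    obtain g' d where g': "g' \<in> carrier G" "d \<noteq> 0" "act g' (uv i0) = vsmult d (uv k)"
      using k unfolding Orb_def by blast
    have "act (g \<otimes>\<^bsub>G\<^esub> g') (uv i0) = act g (vsmult d (uv k))"
      using act_mult[OF g g'(1)] g'(3) by simp
    also have "\<dots> = vsmult (d * c) (uv j)" using act_smult[OF g] e vsmult_vsmult by simp
    finally show ?thesis unfolding Orb_def using mult_G[OF g g'(1)] sf_mult_nz[OF sf g'(2) c] by blast
  qed
  have closeN: "j \<notin> Orb" if k: "k \<notin> Orb" and g: "g \<in> carrier G" and c: "c \<noteq> 0"
    and e: "act g (uv k) = vsmult c (uv j)" for k g c j
  proof
    assume j: "j \<in> Orb"
    obtain c' where c': "c' \<noteq> 0" "act (inv\<^bsub>G\<^esub> g) (uv j) = vsmult c' (uv k)"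
      using act_uv_inv[OF g c e] by blast
    show False using closeO[OF j inv_G[OF g] c'] k by simp
  qed
  define S :: "('n \<Rightarrow> 'k) set" where "S = {v. \<forall>l. l \<notin> Orb \<longrightarrow> v l = 0}"
  define T :: "('n \<Rightarrow> 'k) set" where "T = {v. \<forall>l. l \<in> Orb \<longrightarrow> v l = 0}"
  have subS: "submodule S" unfolding submodule_def S_def by (auto simp: vzero_def vadd_def vsmult_def)
  have subT: "submodule T" unfolding submodule_def T_def by (auto simp: vzero_def vadd_def vsmult_def)
  have "uv i0 \<in> S" unfolding S_def using i0O by (auto simp: uv_def)
  then have S0: "S \<noteq> {vzero}" using uv_nz by auto
  have "uv i \<in> T" unfolding T_def using iO by (auto simp: uv_def)
  then have T0: "T \<noteq> {vzero}" using uv_nz by auto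
  have stS: "G_stable G act S" unfolding G_stable_def
  proof (intro ballI subsetI)
    fix g w assume g: "g \<in> carrier G" and "w \<in> act g ` S"
    then obtain v where v: "v \<in> S" "w = act g v" by blast
    show "w \<in> S" unfolding S_def
    proof (intro CollectI allI impI)
      fix l assume l: "l \<notin> Orb"
      have "w l = (\<Sum>i\<in>UNIV. v i * act g (uv i) l)" unfolding v(2) by (rule act_apply[OF g])
      also have "\<dots> = 0"
      proof (rule sum.neutral, rule ballI)
        fix i
        obtain j c where jc: "c \<noteq> 0" "act g (uv i) = vsmult c (uv j)" using mono[OF g] by blast
        show "v i * act g (uv i) l = 0"
        proof (cases "i \<in> Orb")
          case True
          then have "j \<in> Orb" using closeO[OF True g jc] by simp
          then have "j \<noteq> l" using l by auto
          then show ?thesis using jc by (simp add: vsmult_def uv_def)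
        next
          case False then show ?thesis using v(1) unfolding S_def by simp
        qed
      qed
      finally show "w l = 0" .
    qed
  qed
  have stT: "G_stable G act T" unfolding G_stable_def
  proof (intro ballI subsetI)
    fix g w assume g: "g \<in> carrier G" and "w \<in> act g ` T"
    then obtain v where v: "v \<in> T" "w = act g v" by blast
    show "w \<in> T" unfolding T_def
    proof (intro CollectI allI impI)
      fix l assume l: "l \<in> Orb"
      have "w l = (\<Sum>i\<in>UNIV. v i * act g (uv i) l)" unfolding v(2) by (rule act_apply[OF g])
      also have "\<dots> = 0"
      proof (rule sum.neutral, rule ballI)
        fix i
        obtain j c where jc: "c \<noteq> 0" "act g (uv i) = vsmult c (uv j)" using mono[OF g] by blast
        show "v i * act g (uv i) l = 0"
        proof (cases "i \<in> Orb")
          case False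
          then have "j \<notin> Orb" using closeN[OF False g jc] by simp
          then have "j \<noteq> l" using l by auto
          then show ?thesis using jc by (simp add: vsmult_def uv_def)
        next
          case True then show ?thesis using v(1) unfolding T_def by simp
        qed
      qed
      finally show "w l = 0" .
    qed
  qed
  have ds: "is_direct_sum S T" unfolding is_direct_sum_def
  proof
    fix v :: "'n \<Rightarrow> 'k"
    define p0 where "p0 = ((\<lambda>l. if l \<in> Orb then v l else 0), (\<lambda>l. if l \<in> Orb then 0 else v l))"
    show "\<exists>!p. fst p \<in> S \<and> snd p \<in> T \<and> v = vadd (fst p) (snd p)"
    proof (rule ex1I[of _ p0])
      show "fst p0 \<in> S \<and> snd p0 \<in> T \<and> v = vadd (fst p0) (snd p0)"
        unfolding p0_def S_def T_def by (auto simp: vadd_def)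
    next
      fix p assume p: "fst p \<in> S \<and> snd p \<in> T \<and> v = vadd (fst p) (snd p)"
      have "fst p = fst p0"
      proof (rule ext)
        fix l
        have "v l = fst p l + snd p l" using p by (simp add: vadd_def)
        then show "fst p l = fst p0 l" using p unfolding p0_def S_def T_def by auto
      qed
      moreover have "snd p = snd p0"
      proof (rule ext)
        fix l
        have "v l = fst p l + snd p l" using p by (simp add: vadd_def)
        then show "snd p l = snd p0 l" using p unfolding p0_def S_def T_def by auto
      qed
      ultimately show "p = p0" by (simp add: prod_eq_iff)
    qed
  qed
  show False using ind subS subT S0 T0 stS stT ds unfolding indecomposable_rep_def by blast
qed

end



context mrep
begin

lemma H_G: "H \<subseteq> carrier G" unfolding H_def by blast

lemma H_sub: "subgroup H G"
proof (rule group.subgroupI[OF grp])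
  show "H \<subseteq> carrier G" by (rule H_G)
  have "act \<one>\<^bsub>G\<^esub> ` basis_line i0 = basis_line i0" using act_one by simp
  then show "H \<noteq> {}" unfolding H_def using one_G by blast
next
  fix a assume a: "a \<in> H"
  then have aG: "a \<in> carrier G" and L: "act a ` basis_line i0 = basis_line i0" unfolding H_def by auto
  have "act (inv\<^bsub>G\<^esub> a) ` basis_line i0 = act (inv\<^bsub>G\<^esub> a) ` act a ` basis_line i0" using L by simp
  also have "\<dots> = basis_line i0" by (simp add: image_image act_inv1[OF aG])
  finally show "inv\<^bsub>G\<^esub> a \<in> H" unfolding H_def using inv_G[OF aG] by blast
next
  fix a b assume a: "a \<in> H" and b: "b \<in> H"
  then have aG: "a \<in> carrier G" and La: "act a ` basis_line i0 = basis_line i0"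
    and bG: "b \<in> carrier G" and Lb: "act b ` basis_line i0 = basis_line i0" unfolding H_def by auto
  have "act (a \<otimes>\<^bsub>G\<^esub> b) ` basis_line i0 = act a ` act b ` basis_line i0"
    by (simp add: image_image act_mult[OF aG bG])
  also have "\<dots> = basis_line i0" using La Lb by simp
  finally show "a \<otimes>\<^bsub>G\<^esub> b \<in> H" unfolding H_def using mult_G[OF aG bG] by blast
qed

lemma H_line:
  assumes g: "g \<in> carrier G" and c: "c \<noteq> 0" and e: "act g (uv i0) = vsmult c (uv i0)"
  shows "g \<in> H"
proof -
  obtain c' where c': "c * c' = 1" using sf_inv[OF sf c] by blast
  have img: "act g (vsmult d (uv i0)) = vsmult (d * c) (uv i0)" for d
    using act_smult[OF g] e vsmult_vsmult by simp
  have "act g ` basis_line i0 = basis_line i0"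
  proof
    show "act g ` basis_line i0 \<subseteq> basis_line i0" unfolding basis_line_def using img
      by (auto simp: vsmult_def uv_def[symmetric])
  next
    show "basis_line i0 \<subseteq> act g ` basis_line i0"
    proof
      fix x :: "'n \<Rightarrow> 'k" assume "x \<in> basis_line i0"
      then obtain d :: 'k where d: "x = vsmult d (uv i0)" unfolding basis_line_def uv_def by blast
      have "x = act g (vsmult (d * c') (uv i0))" using img[of "d * c'"] d c'
        by (simp add: mult.assoc mult.commute[of c'])
      moreover have "vsmult (d * c') (uv i0) \<in> basis_line i0" unfolding basis_line_def uv_def by blast
      ultimately show "x \<in> act g ` basis_line i0" by blast
    qed
  qed
  then show ?thesis unfolding H_def using g by blast
qed

lemma H_scal:
  assumes h: "h \<in> H"
  shows "\<exists>c. c \<noteq> 0 \<and> act h (uv i0) = vsmult c (uv i0)"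
proof -
  have hG: "h \<in> carrier G" and L: "act h ` basis_line i0 = basis_line i0" using h unfolding H_def by auto
  have "vsmult 1 (uv i0) \<in> basis_line i0" unfolding basis_line_def uv_def by blast
  then have "uv i0 \<in> basis_line i0" by (simp add: vsmult_one)
  then have "act h (uv i0) \<in> basis_line i0" using L by blast
  then obtain c where c: "act h (uv i0) = vsmult c (uv i0)" unfolding basis_line_def uv_def by blast
  have "c \<noteq> 0"
  proof
    assume "c = 0"
    then have "uv i0 = act (inv\<^bsub>G\<^esub> h) (vsmult 0 (uv i0))" using act_inv1[OF hG, of "uv i0"] c by simp
    also have "\<dots> = vsmult 0 (act (inv\<^bsub>G\<^esub> h) (uv i0))" by (rule act_smult[OF inv_G[OF hG]])
    finally have "uv i0 i0 = vsmult 0 (act (inv\<^bsub>G\<^esub> h) (uv i0)) i0" by simp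
    then show False by (simp add: uv_def vsmult_def)
  qed
  then show ?thesis using c by blast
qed

lemma H_fix:
  assumes h: "h \<in> H"
  shows "act h (uv i0) = uv i0"
proof -
  have hG: "h \<in> carrier G" using h H_G by blast
  obtain c where c: "c \<noteq> 0" "act h (uv i0) = vsmult c (uv i0)" using H_scal[OF h] by blast
  have pw: "act (h [^]\<^bsub>G\<^esub> n) (uv i0) = vsmult (c ^ n) (uv i0)" for n :: nat
  proof (induction n)
    case 0
    then show ?case using act_one grp by (simp add: vsmult_one group.is_monoid)
  next
    case (Suc n)
    have pG: "h [^]\<^bsub>G\<^esub> n \<in> carrier G" using grp hG by (simp add: group.is_monoid monoid.nat_pow_closed)
    have "act (h [^]\<^bsub>G\<^esub> Suc n) (uv i0) = act (h [^]\<^bsub>G\<^esub> n) (act h (uv i0))"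
      using grp act_mult[OF pG hG] by (simp add: group.is_monoid monoid.nat_pow_Suc)
    also have "\<dots> = vsmult c (vsmult (c ^ n) (uv i0))" using c(2) act_smult[OF pG] Suc by simp
    also have "\<dots> = vsmult (c ^ Suc n) (uv i0)" by (simp add: vsmult_vsmult)
    finally show ?case .
  qed
  obtain i j :: nat where ij: "i < j" "h [^]\<^bsub>G\<^esub> i = h [^]\<^bsub>G\<^esub> j"
    using finite_pow_repeat[OF fin hG group.is_monoid[OF grp]] by blast
  have "vsmult (c ^ i) (uv i0) i0 = vsmult (c ^ j) (uv i0) i0" using pw[of i] pw[of j] ij(2) by simp
  then have cij: "c ^ i = c ^ j" by (simp add: vsmult_def uv_def)
  have "c ^ j = c ^ (j - i) * c ^ i" using ij(1) by (simp add: power_add[symmetric])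
  then have "c ^ (j - i) * c ^ i = 1 * c ^ i" using cij by simp
  then have "c ^ (j - i) = 1" using sf_cancel[OF sf sf_pow_nz[OF sf c(1)]] by blast
  then have "c = 1" using sf_torsion[OF sf, of c "j - i"] ij(1) by simp
  then show ?thesis using c(2) vsmult_one by simp
qed

lemma H_comp: assumes h: "h \<in> H" shows "act h u i0 = u i0"
proof -
  have hG: "h \<in> carrier G" using h H_G by blast
  have e: "act h (uv i0) = vsmult 1 (uv i0)" using H_fix[OF h] by (simp add: vsmult_one)
  show ?thesis using compo[OF hG _ e, of u] by simp
qed

lemma T6: assumes y: "y \<in> carrier G" shows "act y (uv i0) i0 = (if y \<in> H then 1 else 0)"
proof (cases "y \<in> H")
  case True then show ?thesis using H_fix by (simp add: uv_def)
next
  case False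
  obtain j c where jc: "c \<noteq> 0" "act y (uv i0) = vsmult c (uv j)" using mono[OF y] by blast
  have "j \<noteq> i0" using H_line[OF y jc(1)] jc(2) False by auto
  then show ?thesis using False jc by (simp add: vsmult_def uv_def)
qed

lemma decomp: "v = vsum (\<lambda>x. vsmult (act (inv\<^bsub>G\<^esub> x) v i0) (act x (uv i0))) (carrier G)"
proof (rule ext)
  fix i
  obtain x c where x: "x \<in> carrier G" "c \<noteq> 0" "act x (uv i0) = vsmult c (uv i)" using trans_ex by blast
  have "(\<Sum>x\<in>carrier G. act (inv\<^bsub>G\<^esub> x) v i0 * act x (uv i0) i) = v i"
  proof (rule idem_sum[OF fin, of _ "v i" x])
    show "v i + v i = v i" by (rule sf_idem[OF sf])
    show "\<forall>x\<in>carrier G. act (inv\<^bsub>G\<^esub> x) v i0 * act x (uv i0) i = 0 \<or>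
        act (inv\<^bsub>G\<^esub> x) v i0 * act x (uv i0) i = v i"
    proof
      fix x assume x: "x \<in> carrier G"
      obtain j c where jc: "c \<noteq> 0" "act x (uv i0) = vsmult c (uv j)" using mono[OF x] by blast
      show "act (inv\<^bsub>G\<^esub> x) v i0 * act x (uv i0) i = 0 \<or>
        act (inv\<^bsub>G\<^esub> x) v i0 * act x (uv i0) i = v i"
      proof (cases "j = i")
        case True
        obtain c' where c': "c' \<noteq> 0" "c * c' = 1" "act (inv\<^bsub>G\<^esub> x) (uv j) = vsmult c' (uv i0)"
          using act_uv_inv[OF x jc] by blast
        have "act (inv\<^bsub>G\<^esub> x) v i0 = c' * v j" by (rule compo[OF inv_G[OF x] c'(1) c'(3)])
        then have "act (inv\<^bsub>G\<^esub> x) v i0 * act x (uv i0) i = c' * v i * c"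
          using jc True by (simp add: vsmult_def uv_def)
        also have "\<dots> = v i" using c'(2) by (metis mult.assoc mult.commute mult_1)
        finally show ?thesis by blast
      next
        case False then show ?thesis using jc by (simp add: vsmult_def uv_def)
      qed
    qed
    obtain c' where c': "c' \<noteq> 0" "c * c' = 1" "act (inv\<^bsub>G\<^esub> x) (uv i) = vsmult c' (uv i0)"
      using act_uv_inv[OF x] by blast
    have "act (inv\<^bsub>G\<^esub> x) v i0 = c' * v i" by (rule compo[OF inv_G[OF x(1)] c'(1) c'(3)])
    then have "act (inv\<^bsub>G\<^esub> x) v i0 * act x (uv i0) i = c' * v i * c"
      using x by (simp add: vsmult_def uv_def)
    also have "\<dots> = v i" using c'(2) by (metis mult.assoc mult.commute mult_1)
    finally show "act (inv\<^bsub>G\<^esub> x) v i0 * act x (uv i0) i = v i" .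
    show "x \<in> carrier G" by (rule x(1))
  qed
  then show "v i = vsum (\<lambda>x. vsmult (act (inv\<^bsub>G\<^esub> x) v i0) (act x (uv i0))) (carrier G) i"
    by (simp add: vsum_def vsmult_def)
qed

end



lemma vsum_cong: "(\<And>x. x \<in> A \<Longrightarrow> f x = g x) \<Longrightarrow> vsum f A = vsum g A"
  unfolding vsum_def by (auto intro!: sum.cong)

lemma grp_reindex:
  fixes G (structure)
  assumes "group G" "k \<in> carrier G"
  shows "sum f (carrier G) = sum (\<lambda>y. f (k \<otimes>\<^bsub>G\<^esub> y)) (carrier G)"
proof -
  interpret group G by (rule assms(1))
  have "bij_betw (\<lambda>y. k \<otimes> y) (carrier G) (carrier G)"
    by (rule bij_betw_byWitness[where f' = "\<lambda>y. inv k \<otimes> y"])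
       (auto simp: assms(2) m_assoc[symmetric])
  then show ?thesis by (rule sum.reindex_bij_betw[symmetric])
qed

lemma vsum_reindex:
  assumes "group G" "k \<in> carrier G"
  shows "vsum f (carrier G) = vsum (\<lambda>y. f (k \<otimes>\<^bsub>G\<^esub> y)) (carrier G)"
  unfolding vsum_def by (rule ext) (rule grp_reindex[OF assms])

locale mhom = V: mrep G actV i0 HV + W: mrep G actW j0 HW
  for G :: "('g, 'b) monoid_scheme" (structure)
    and actV :: "'g \<Rightarrow> ('n::finite \<Rightarrow> 'k::comm_semiring_1) \<Rightarrow> ('n \<Rightarrow> 'k)" and i0 HV
    and actW :: "'g \<Rightarrow> ('m::finite \<Rightarrow> 'k) \<Rightarrow> ('m \<Rightarrow> 'k)" and j0 HW

sublocale mhom \<subseteq> group G by (rule V.grp)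

context mhom
begin

definition Winv :: "('m \<Rightarrow> 'k) set" where
  "Winv = {w. \<forall>h\<in>HV. actW h w = w}"

definition phiw :: "('m \<Rightarrow> 'k) \<Rightarrow> ('n \<Rightarrow> 'k) \<Rightarrow> ('m \<Rightarrow> 'k)" where
  "phiw w v = vsum (\<lambda>x. vsmult (actV (inv x) v i0) (actW x w)) (carrier G)"

definition Bset :: "('g \<Rightarrow> 'k) set" where
  "Bset = {F \<in> carrier G \<rightarrow>\<^sub>E UNIV. (\<forall>h\<in>HV. \<forall>x\<in>carrier G. F (h \<otimes> x) = F x) \<and>
                                  (\<forall>k\<in>HW. \<forall>x\<in>carrier G. F (x \<otimes> k) = F x)}"

lemma hom_det:
  assumes phi: "\<phi> \<in> rep_homs G actV actW"
  shows "\<phi> v = phiw (\<phi> (uv i0)) v"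
proof -
  have lin: "klinear \<phi>" and eq: "\<And>g v. g \<in> carrier G \<Longrightarrow> \<phi> (actV g v) = actW g (\<phi> v)"
    using phi unfolding rep_homs_def by auto
  have "\<phi> v = \<phi> (vsum (\<lambda>x. vsmult (actV (inv x) v i0) (actV x (uv i0))) (carrier G))"
    using V.decomp[of v] by simp
  also have "\<dots> = vsum (\<lambda>x. \<phi> (vsmult (actV (inv x) v i0) (actV x (uv i0)))) (carrier G)"
    by (rule klinear_vsum[OF lin V.fin])
  also have "\<dots> = phiw (\<phi> (uv i0)) v" unfolding phiw_def
    by (rule vsum_cong) (simp add: klinear_smult[OF lin] eq)
  finally show ?thesis .
qed

lemma phiw_hom: "phiw w \<in> rep_homs G actV actW"
proof -
  have add: "phiw w (vadd u v) = vadd (phiw w u) (phiw w v)" for u v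
  proof (rule ext)
    fix j
    have la: "actV (inv x) (vadd u v) i0 = actV (inv x) u i0 + actV (inv x) v i0" if x: "x \<in> carrier G" for x
      using klinear_add[OF V.lin[of "inv x"], of u v] x by (simp add: vadd_def)
    have "phiw w (vadd u v) j = (\<Sum>x\<in>carrier G. (actV (inv x) u i0 + actV (inv x) v i0) * actW x w j)"
      unfolding phiw_def vsum_def vsmult_def
      by (auto intro!: sum.cong simp: la)
    also have "\<dots> = phiw w u j + phiw w v j"
      unfolding phiw_def vsum_def vsmult_def by (simp add: distrib_right sum.distrib)
    finally show "phiw w (vadd u v) j = vadd (phiw w u) (phiw w v) j" by (simp add: vadd_def)
  qed
  have sm: "phiw w (vsmult c v) = vsmult c (phiw w v)" for c v
  proof (rule ext)
    fix j
    have ls: "actV (inv x) (vsmult c v) i0 = c * actV (inv x) v i0" if x: "x \<in> carrier G" for x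
      using klinear_smult[OF V.lin[of "inv x"], of c v] x by (simp add: vsmult_def)
    have "phiw w (vsmult c v) j = (\<Sum>x\<in>carrier G. c * (actV (inv x) v i0 * actW x w j))"
      unfolding phiw_def vsum_def
      by (auto intro!: sum.cong simp: ls vsmult_def[of _ "actW _ w"] mult.assoc)
    also have "\<dots> = vsmult c (phiw w v) j"
      unfolding phiw_def vsum_def vsmult_def by (simp add: sum_distrib_left)
    finally show "phiw w (vsmult c v) j = vsmult c (phiw w v) j" .
  qed
  have eqv: "phiw w (actV k v) = actW k (phiw w v)" if k: "k \<in> carrier G" for k v
  proof -
    have "actW k (phiw w v) = vsum (\<lambda>x. actW k (vsmult (actV (inv x) v i0) (actW x w))) (carrier G)"
      unfolding phiw_def by (rule klinear_vsum[OF W.lin[OF k] V.fin])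
    also have "\<dots> = vsum (\<lambda>x. vsmult (actV (inv x) v i0) (actW (k \<otimes> x) w)) (carrier G)"
      by (rule vsum_cong) (simp add: W.act_smult[OF k] W.act_mult[OF k])
    finally have R: "actW k (phiw w v) = \<dots>" .
    have "phiw w (actV k v) = vsum (\<lambda>y. vsmult (actV (inv (k \<otimes> y)) (actV k v) i0) (actW (k \<otimes> y) w)) (carrier G)"
      unfolding phiw_def by (rule vsum_reindex[OF V.grp k])
    also have "\<dots> = vsum (\<lambda>x. vsmult (actV (inv x) v i0) (actW (k \<otimes> x) w)) (carrier G)"
    proof (rule vsum_cong)
      fix y assume y: "y \<in> carrier G"
      have "actV (inv (k \<otimes> y)) (actV k v) = actV (inv (k \<otimes> y) \<otimes> k) v"
        using k y by (simp add: V.act_mult)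
      also have "inv (k \<otimes> y) \<otimes> k = inv y"
        using k y by (simp add: inv_mult_group m_assoc)
      finally show "vsmult (actV (inv (k \<otimes> y)) (actV k v) i0) (actW (k \<otimes> y) w) =
          vsmult (actV (inv y) v i0) (actW (k \<otimes> y) w)" by simp
    qed
    finally show ?thesis using R by simp
  qed
  have "klinear (phiw w)" unfolding klinear_def by (intro conjI allI add sm)
  then show ?thesis unfolding rep_homs_def by (intro CollectI conjI ballI allI eqv)
qed

lemma HV_inv: "h \<in> HV \<Longrightarrow> inv h \<in> HV"
  using V.H_sub by (simp add: subgroup.m_inv_closed)

lemma HW_inv: "h \<in> HW \<Longrightarrow> inv h \<in> HW"
  using W.H_sub by (simp add: subgroup.m_inv_closed)

lemma phiw_e:
  assumes w: "w \<in> Winv"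
  shows "phiw w (uv i0) = w"
proof (rule ext)
  fix j
  have "(\<Sum>x\<in>carrier G. actV (inv x) (uv i0) i0 * actW x w j) = w j"
  proof (rule idem_sum[OF V.fin, of _ "w j" \<one>])
    show "w j + w j = w j" by (rule sf_idem[OF V.sf])
    show "\<one> \<in> carrier G" by simp
    show "actV (inv \<one>) (uv i0) i0 * actW \<one> w j = w j"
      using V.act_one W.act_one by (simp add: uv_def)
    show "\<forall>x\<in>carrier G. actV (inv x) (uv i0) i0 * actW x w j = 0 \<or> actV (inv x) (uv i0) i0 * actW x w j = w j"
    proof
      fix x assume x: "x \<in> carrier G"
      show "actV (inv x) (uv i0) i0 * actW x w j = 0 \<or> actV (inv x) (uv i0) i0 * actW x w j = w j"
      proof (cases "inv x \<in> HV")
        case True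
        then have "x \<in> HV" using HV_inv[OF True] x by simp
        then have "actW x w = w" using w unfolding Winv_def by blast
        then show ?thesis using V.T6[of "inv x"] x True by simp
      next
        case False then show ?thesis using V.T6[of "inv x"] x by simp
      qed
    qed
  qed
  then show "phiw w (uv i0) j = w j" unfolding phiw_def vsum_def vsmult_def by simp
qed

lemma bij1: "bij_betw (\<lambda>\<phi>. \<phi> (uv i0)) (rep_homs G actV actW) Winv"
  unfolding bij_betw_def
proof
  show "inj_on (\<lambda>\<phi>. \<phi> (uv i0)) (rep_homs G actV actW)"
  proof (rule inj_onI)
    fix \<phi> \<psi> assume a: "\<phi> \<in> rep_homs G actV actW" "\<psi> \<in> rep_homs G actV actW" "\<phi> (uv i0) = \<psi> (uv i0)"
    show "\<phi> = \<psi>"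
    proof (rule ext)
      fix v
      have "\<phi> v = phiw (\<phi> (uv i0)) v" by (rule hom_det[OF a(1)])
      also have "\<dots> = phiw (\<psi> (uv i0)) v" using a(3) by simp
      also have "\<dots> = \<psi> v" by (rule hom_det[OF a(2), symmetric])
      finally show "\<phi> v = \<psi> v" .
    qed
  qed
  show "(\<lambda>\<phi>. \<phi> (uv i0)) ` rep_homs G actV actW = Winv"
  proof
    show "(\<lambda>\<phi>. \<phi> (uv i0)) ` rep_homs G actV actW \<subseteq> Winv"
    proof
      fix w assume "w \<in> (\<lambda>\<phi>. \<phi> (uv i0)) ` rep_homs G actV actW"
      then obtain \<phi> where phi: "\<phi> \<in> rep_homs G actV actW" "w = \<phi> (uv i0)" by blast
      show "w \<in> Winv" unfolding Winv_def
      proof (intro CollectI ballI)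
        fix h assume h: "h \<in> HV"
        then have hG: "h \<in> carrier G" using V.H_G by blast
        have "actW h w = \<phi> (actV h (uv i0))" using phi hG unfolding rep_homs_def by simp
        then show "actW h w = w" using V.H_fix[OF h] phi(2) by simp
      qed
    qed
    show "Winv \<subseteq> (\<lambda>\<phi>. \<phi> (uv i0)) ` rep_homs G actV actW"
    proof
      fix w assume "w \<in> Winv"
      then have "w = phiw w (uv i0)" using phiw_e by simp
      then show "w \<in> (\<lambda>\<phi>. \<phi> (uv i0)) ` rep_homs G actV actW" using phiw_hom by blast
    qed
  qed
qed

end



context mhom
begin

definition Rw :: "('m \<Rightarrow> 'k) \<Rightarrow> 'g \<Rightarrow> 'k" where
  "Rw w = restrict (\<lambda>x. actW (inv x) w j0) (carrier G)"

lemma HV_G: "HV \<subseteq> carrier G" by (rule V.H_G)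
lemma HW_G: "HW \<subseteq> carrier G" by (rule W.H_G)

lemma actW_sumF:
  assumes g: "g \<in> carrier G"
  shows "actW g (vsum (\<lambda>y. vsmult (F y) (actW y (uv j0))) (carrier G)) =
         vsum (\<lambda>y. vsmult (F y) (actW (g \<otimes> y) (uv j0))) (carrier G)"
proof -
  have "actW g (vsum (\<lambda>y. vsmult (F y) (actW y (uv j0))) (carrier G)) =
      vsum (\<lambda>y. actW g (vsmult (F y) (actW y (uv j0)))) (carrier G)"
    by (rule klinear_vsum[OF W.lin[OF g] V.fin])
  also have "\<dots> = vsum (\<lambda>y. vsmult (F y) (actW (g \<otimes> y) (uv j0))) (carrier G)"
    by (rule vsum_cong) (simp add: W.act_smult[OF g] W.act_mult[OF g])
  finally show ?thesis .
qed

lemma bij2: "bij_betw Rw Winv Bset"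
  unfolding bij_betw_def
proof
  show "inj_on Rw Winv"
  proof (rule inj_onI)
    fix w w' assume a: "w \<in> Winv" "w' \<in> Winv" "Rw w = Rw w'"
    have c: "actW (inv x) w j0 = actW (inv x) w' j0" if x: "x \<in> carrier G" for x
      using fun_cong[OF a(3), of x] x unfolding Rw_def by simp
    have "w = vsum (\<lambda>x. vsmult (actW (inv x) w j0) (actW x (uv j0))) (carrier G)" by (rule W.decomp)
    also have "\<dots> = vsum (\<lambda>x. vsmult (actW (inv x) w' j0) (actW x (uv j0))) (carrier G)"
      by (rule vsum_cong) (simp add: c)
    also have "\<dots> = w'" by (rule W.decomp[symmetric])
    finally show "w = w'" .
  qed
  show "Rw ` Winv = Bset"
  proof
    show "Rw ` Winv \<subseteq> Bset"
    proof
      fix F assume "F \<in> Rw ` Winv"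
      then obtain w where w: "w \<in> Winv" "F = Rw w" by blast
      have l: "F (h \<otimes> x) = F x" if h: "h \<in> HV" and x: "x \<in> carrier G" for h x
      proof -
        have hG: "h \<in> carrier G" using h HV_G by blast
        have "actW (inv (h \<otimes> x)) w = actW (inv x) (actW (inv h) w)"
          using hG x by (simp add: inv_mult_group W.act_mult)
        also have "actW (inv h) w = w" using w(1) HV_inv[OF h] unfolding Winv_def by blast
        finally show ?thesis using w(2) hG x unfolding Rw_def by simp
      qed
      have r: "F (x \<otimes> k) = F x" if k: "k \<in> HW" and x: "x \<in> carrier G" for k x
      proof -
        have kG: "k \<in> carrier G" using k HW_G by blast
        have "actW (inv (x \<otimes> k)) w j0 = actW (inv k) (actW (inv x) w) j0"
          using kG x by (simp add: inv_mult_group W.act_mult)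
        also have "\<dots> = actW (inv x) w j0" by (rule W.H_comp[OF HW_inv[OF k]])
        finally show ?thesis using w(2) kG x unfolding Rw_def by simp
      qed
      have "F \<in> carrier G \<rightarrow>\<^sub>E UNIV" using w(2) unfolding Rw_def by simp
      then show "F \<in> Bset" unfolding Bset_def using l r by simp
    qed
    show "Bset \<subseteq> Rw ` Winv"
    proof
      fix F assume F: "F \<in> Bset"
      then have FE: "F \<in> carrier G \<rightarrow>\<^sub>E UNIV"
        and Fl: "\<And>h x. h \<in> HV \<Longrightarrow> x \<in> carrier G \<Longrightarrow> F (h \<otimes> x) = F x"
        and Fr: "\<And>k x. k \<in> HW \<Longrightarrow> x \<in> carrier G \<Longrightarrow> F (x \<otimes> k) = F x"
        unfolding Bset_def by auto
      define w where "w = vsum (\<lambda>y. vsmult (F y) (actW y (uv j0))) (carrier G)"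
      have wW: "w \<in> Winv" unfolding Winv_def
      proof (intro CollectI ballI)
        fix h assume h: "h \<in> HV"
        have hG: "h \<in> carrier G" using h HV_G by blast
        have "actW h w = vsum (\<lambda>y. vsmult (F y) (actW (h \<otimes> y) (uv j0))) (carrier G)"
          unfolding w_def by (rule actW_sumF[OF hG])
        also have "\<dots> = vsum (\<lambda>y. vsmult (F (h \<otimes> y)) (actW (h \<otimes> y) (uv j0))) (carrier G)"
          by (rule vsum_cong) (simp add: Fl[OF h])
        also have "\<dots> = w" unfolding w_def by (rule vsum_reindex[OF V.grp hG, symmetric])
        finally show "actW h w = w" .
      qed
      have "Rw w = F"
      proof (rule ext)
        fix x
        show "Rw w x = F x"
        proof (cases "x \<in> carrier G")
          case False
          have "F x = undefined" using PiE_arb[OF FE False] .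
          then show ?thesis unfolding Rw_def using False by simp
        next
          case x: True
          have ix: "inv x \<in> carrier G" using x by simp
          have "Rw w x = vsum (\<lambda>y. vsmult (F y) (actW (inv x \<otimes> y) (uv j0))) (carrier G) j0"
            using x actW_sumF[OF ix] unfolding Rw_def w_def by simp
          also have "\<dots> = (\<Sum>y\<in>carrier G. F y * actW (inv x \<otimes> y) (uv j0) j0)"
            by (simp add: vsum_def vsmult_def)
          also have "\<dots> = F x"
          proof (rule idem_sum[OF V.fin, of _ "F x" x])
            show "F x + F x = F x" by (rule sf_idem[OF V.sf])
            show "x \<in> carrier G" by (rule x)
            show "F x * actW (inv x \<otimes> x) (uv j0) j0 = F x"
              using x W.act_one by (simp add: uv_def)
            show "\<forall>y\<in>carrier G. F y * actW (inv x \<otimes> y) (uv j0) j0 = 0 \<or>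
                F y * actW (inv x \<otimes> y) (uv j0) j0 = F x"
            proof
              fix y assume y: "y \<in> carrier G"
              have iy: "inv x \<otimes> y \<in> carrier G" using ix y by simp
              show "F y * actW (inv x \<otimes> y) (uv j0) j0 = 0 \<or> F y * actW (inv x \<otimes> y) (uv j0) j0 = F x"
              proof (cases "inv x \<otimes> y \<in> HW")
                case True
                have "x \<otimes> (inv x \<otimes> y) = y" using x y by (simp add: m_assoc[symmetric])
                then have "F y = F x" using Fr[OF True x] by simp
                then show ?thesis using W.T6[OF iy] True by simp
              next
                case False then show ?thesis using W.T6[OF iy] by simp
              qed
            qed
          qed
          finally show ?thesis .
        qed
      qed
      then show "F \<in> Rw ` Winv" using wW by blast
    qed
  qed
qed

lemma dc_mem: "x \<in> carrier G \<Longrightarrow> x \<in> double_coset G HV x HW"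
  unfolding double_coset_def using V.H_sub W.H_sub
  by (auto intro!: exI[of _ \<one>] simp: subgroup.one_closed)

lemma dc_left:
  assumes h: "h \<in> HV" and x: "x \<in> carrier G"
  shows "double_coset G HV (h \<otimes> x) HW = double_coset G HV x HW"
proof -
  have hG: "h \<in> carrier G" using h HV_G by blast
  show ?thesis unfolding double_coset_def
  proof (rule Set.set_eqI, rule iffI)
    fix y assume "y \<in> {h' \<otimes> (h \<otimes> x) \<otimes> k |h' k. h' \<in> HV \<and> k \<in> HW}"
    then obtain h' k where hk: "h' \<in> HV" "k \<in> HW" "y = h' \<otimes> (h \<otimes> x) \<otimes> k" by blast
    have "y = (h' \<otimes> h) \<otimes> x \<otimes> k" using hk hG x HV_G by (simp add: m_assoc subsetD)
    moreover have "h' \<otimes> h \<in> HV" using hk h V.H_sub by (simp add: subgroup.m_closed)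
    ultimately show "y \<in> {h' \<otimes> x \<otimes> k |h' k. h' \<in> HV \<and> k \<in> HW}" using hk by blast
  next
    fix y assume "y \<in> {h' \<otimes> x \<otimes> k |h' k. h' \<in> HV \<and> k \<in> HW}"
    then obtain h' k where hk: "h' \<in> HV" "k \<in> HW" "y = h' \<otimes> x \<otimes> k" by blast
    have h'G: "h' \<in> carrier G" using hk HV_G by blast
    have e1: "h' \<otimes> inv h \<otimes> h = h'" using hG h'G by (simp add: m_assoc)
    have "(h' \<otimes> inv h) \<otimes> (h \<otimes> x) = h' \<otimes> x" using hG h'G x e1 by (simp add: m_assoc[symmetric])
    then have "y = (h' \<otimes> inv h) \<otimes> (h \<otimes> x) \<otimes> k" using hk by simp
    moreover have "h' \<otimes> inv h \<in> HV" using hk HV_inv[OF h] V.H_sub by (simp add: subgroup.m_closed)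
    ultimately show "y \<in> {h' \<otimes> (h \<otimes> x) \<otimes> k |h' k. h' \<in> HV \<and> k \<in> HW}" using hk by blast
  qed
qed

lemma dc_right:
  assumes k: "k \<in> HW" and x: "x \<in> carrier G"
  shows "double_coset G HV (x \<otimes> k) HW = double_coset G HV x HW"
proof -
  have kG: "k \<in> carrier G" using k HW_G by blast
  show ?thesis unfolding double_coset_def
  proof (rule Set.set_eqI, rule iffI)
    fix y assume "y \<in> {h' \<otimes> (x \<otimes> k) \<otimes> k' |h' k'. h' \<in> HV \<and> k' \<in> HW}"
    then obtain h' k' where hk: "h' \<in> HV" "k' \<in> HW" "y = h' \<otimes> (x \<otimes> k) \<otimes> k'" by blast
    have "h' \<in> carrier G" "k' \<in> carrier G" using hk HV_G HW_G by auto
    then have "y = h' \<otimes> x \<otimes> (k \<otimes> k')" using hk kG x by (simp add: m_assoc)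
    moreover have "k \<otimes> k' \<in> HW" using hk k W.H_sub by (simp add: subgroup.m_closed)
    ultimately show "y \<in> {h' \<otimes> x \<otimes> k' |h' k'. h' \<in> HV \<and> k' \<in> HW}" using hk by blast
  next
    fix y assume "y \<in> {h' \<otimes> x \<otimes> k' |h' k'. h' \<in> HV \<and> k' \<in> HW}"
    then obtain h' k' where hk: "h' \<in> HV" "k' \<in> HW" "y = h' \<otimes> x \<otimes> k'" by blast
    have G2: "h' \<in> carrier G" "k' \<in> carrier G" using hk HV_G HW_G by auto
    have e1: "k \<otimes> (inv k \<otimes> k') = k'" using kG G2 by (simp add: m_assoc[symmetric])
    have "y = h' \<otimes> (x \<otimes> k) \<otimes> (inv k \<otimes> k')" using hk kG x G2 e1 by (simp add: m_assoc)
    moreover have "inv k \<otimes> k' \<in> HW" using hk HW_inv[OF k] W.H_sub by (simp add: subgroup.m_closed)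
    ultimately show "y \<in> {h' \<otimes> (x \<otimes> k) \<otimes> k' |h' k'. h' \<in> HV \<and> k' \<in> HW}" using hk by blast
  qed
qed

definition Delta :: "('g set \<Rightarrow> 'k) \<Rightarrow> 'g \<Rightarrow> 'k" where
  "Delta Q = restrict (\<lambda>x. Q (double_coset G HV x HW)) (carrier G)"

lemma bij3: "bij_betw Delta (double_cosets G HV HW \<rightarrow>\<^sub>E (UNIV :: 'k set)) Bset"
  unfolding bij_betw_def
proof
  show "inj_on Delta (double_cosets G HV HW \<rightarrow>\<^sub>E UNIV)"
  proof (rule inj_onI)
    fix Q Q' assume a: "Q \<in> double_cosets G HV HW \<rightarrow>\<^sub>E (UNIV :: 'k set)"
      "Q' \<in> double_cosets G HV HW \<rightarrow>\<^sub>E (UNIV :: 'k set)" "Delta Q = Delta Q'"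
    show "Q = Q'"
    proof (rule ext)
      fix D
      show "Q D = Q' D"
      proof (cases "D \<in> double_cosets G HV HW")
        case True
        then obtain x where x: "x \<in> carrier G" "D = double_coset G HV x HW"
          unfolding double_cosets_def by blast
        show ?thesis using fun_cong[OF a(3), of x] x unfolding Delta_def by simp
      next
        case False
        show ?thesis using PiE_arb[OF a(1) False] PiE_arb[OF a(2) False] by simp
      qed
    qed
  qed
  show "Delta ` (double_cosets G HV HW \<rightarrow>\<^sub>E UNIV) = Bset"
  proof
    show "Delta ` (double_cosets G HV HW \<rightarrow>\<^sub>E UNIV) \<subseteq> Bset"
    proof
      fix F assume "F \<in> Delta ` (double_cosets G HV HW \<rightarrow>\<^sub>E UNIV)"
      then obtain Q where Q: "F = Delta Q" by blast
      have "F \<in> carrier G \<rightarrow>\<^sub>E UNIV" unfolding Q Delta_def by simp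
      moreover have "\<forall>h\<in>HV. \<forall>x\<in>carrier G. F (h \<otimes> x) = F x"
        using HV_G unfolding Q Delta_def by (auto simp: dc_left subsetD)
      moreover have "\<forall>k\<in>HW. \<forall>x\<in>carrier G. F (x \<otimes> k) = F x"
        using HW_G unfolding Q Delta_def by (auto simp: dc_right subsetD)
      ultimately show "F \<in> Bset" unfolding Bset_def by blast
    qed
    show "Bset \<subseteq> Delta ` (double_cosets G HV HW \<rightarrow>\<^sub>E UNIV)"
    proof
      fix F assume F: "F \<in> Bset"
      then have FE: "F \<in> carrier G \<rightarrow>\<^sub>E UNIV"
        and Fl: "\<And>h x. h \<in> HV \<Longrightarrow> x \<in> carrier G \<Longrightarrow> F (h \<otimes> x) = F x"
        and Fr: "\<And>k x. k \<in> HW \<Longrightarrow> x \<in> carrier G \<Longrightarrow> F (x \<otimes> k) = F x"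
        unfolding Bset_def by auto
      define Q where "Q = restrict (\<lambda>D. F (SOME y. y \<in> D)) (double_cosets G HV HW)"
      have QE: "Q \<in> double_cosets G HV HW \<rightarrow>\<^sub>E UNIV" unfolding Q_def by simp
      have "Delta Q = F"
      proof (rule ext)
        fix x show "Delta Q x = F x"
        proof (cases "x \<in> carrier G")
          case False
          have "F x = undefined" using PiE_arb[OF FE False] .
          then show ?thesis unfolding Delta_def using False by simp
        next
          case x: True
          define y where "y = (SOME y. y \<in> double_coset G HV x HW)"
          have "y \<in> double_coset G HV x HW" unfolding y_def using dc_mem[OF x] by (rule someI)
          then obtain h k where hk: "h \<in> HV" "k \<in> HW" "y = h \<otimes> x \<otimes> k"
            unfolding double_coset_def by blast
          have hG: "h \<in> carrier G" using hk HV_G by blast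
          have "F y = F (h \<otimes> x)" using hk Fr[OF hk(2)] hG x by simp
          also have "\<dots> = F x" by (rule Fl[OF hk(1) x])
          finally have Fy: "F y = F x" .
          have "double_coset G HV x HW \<in> double_cosets G HV HW" unfolding double_cosets_def using x by blast
          then show ?thesis unfolding Delta_def Q_def using x Fy y_def by simp
        qed
      qed
      then show "F \<in> Delta ` (double_cosets G HV HW \<rightarrow>\<^sub>E UNIV)" using QE by blast
    qed
  qed
qed

lemma main_bij: "\<exists>\<Phi>. bij_betw \<Phi> (rep_homs G actV actW) (double_cosets G HV HW \<rightarrow>\<^sub>E (UNIV :: 'k set))"
proof -
  have "bij_betw (Rw \<circ> (\<lambda>\<phi>. \<phi> (uv i0))) (rep_homs G actV actW) Bset"
    by (rule bij_betw_trans[OF bij1 bij2])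
  moreover have "bij_betw (inv_into (double_cosets G HV HW \<rightarrow>\<^sub>E (UNIV :: 'k set)) Delta) Bset
      (double_cosets G HV HW \<rightarrow>\<^sub>E (UNIV :: 'k set))"
    by (rule bij_betw_inv_into[OF bij3])
  ultimately show ?thesis using bij_betw_trans by blast
qed

end

theorem proposition3p20:
  fixes G :: "('g, 'b) monoid_scheme"
    and actV :: "'g \<Rightarrow> ('n::finite \<Rightarrow> 'k::comm_semiring_1) \<Rightarrow> ('n \<Rightarrow> 'k)"
    and actW :: "'g \<Rightarrow> ('m::finite \<Rightarrow> 'k) \<Rightarrow> ('m \<Rightarrow> 'k)"
    and HV HW :: "'g set"
  assumes "group G" and "finite (carrier G)"
    and "idempotent_semifield TYPE('k)"
    and "indecomposable_rep G actV" and "indecomposable_rep G actW"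
    and "HV \<in> line_stabilizers G actV" and "HW \<in> line_stabilizers G actW"
  shows "\<exists>\<Phi>. bij_betw \<Phi> (rep_homs G actV actW) (double_cosets G HV HW \<rightarrow>\<^sub>E (UNIV :: 'k set))"
proof -
  obtain i0 where i0: "HV = {g \<in> carrier G. actV g ` basis_line i0 = basis_line i0}"
    using assms(6) unfolding line_stabilizers_def by blast
  obtain j0 where j0: "HW = {g \<in> carrier G. actW g ` basis_line j0 = basis_line j0}"
    using assms(7) unfolding line_stabilizers_def by blast
  have "mhom G actV i0 HV actW j0 HW"
    by (intro mhom.intro mrep.intro assms(1,2,3,4,5) i0 j0)
  then show ?thesis by (rule mhom.main_bij)
qed


end
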